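(* For every integer $i>1$, $\mathfrak{L}(\mathrm{rtDBVASIZE}(i-1))\subsetneq\mathfrak{L}(\mathrm{rtDBVASIZE}(i))$.
   Context: A real-time deterministic blind vector automaton of dimension $k$ ($\mathrm{rtDBVA}(k)$) is a 6-tuple $(Q,\Sigma,\delta,q_0,Q_a,v)$ with finite state set $Q$, initial state $q_0$, accept states $Q_a$, initial row vector $v\in\mathbb{Q}^k$ (freely chosen), and $\delta:Q\times(\Sigma\cup\{\cent,\$\})\to Q\times S$, $S$ the set of $k\times k$ rational matrices; the input $w$ is read as $\cent w\$$ left to right, one symbol per step, and $\delta(q,\sigma)=(q',M)$ means that in state $q$ reading $\sigma$ the machine goes to $q'$ and multiplies its row vector on the right by $M$. The input is accepted iff after processing $\$$ the state is in $Q_a$ and the first vector entry equals $1$. The size of an $m$-state $\mathrm{rtDBVA}(k)$ is $mk$. $\mathfrak{L}(\mathrm{rtDBVASIZE}(i))$ denotes the class of languages recognized by real-time deterministic blind vector automata of size $i$. *)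

theory Defs
  imports Complex_Main
begin

datatype 'a tsym = Cent | Dollar | Sym 'a

text \<open>Row vectors of dimension k are functions nat => rat (entries 0..k-1 relevant),
  k x k matrices are functions nat => nat => rat (entries with indices < k relevant).\<close>
definition vec_mat :: "nat \<Rightarrow> (nat \<Rightarrow> rat) \<Rightarrow> (nat \<Rightarrow> nat \<Rightarrow> rat) \<Rightarrow> (nat \<Rightarrow> rat)" where
  "vec_mat k v M = (\<lambda>j. \<Sum>i<k. v i * M i j)"

definition dbva_step ::
  "nat \<Rightarrow> (nat \<Rightarrow> 'a tsym \<Rightarrow> nat \<times> (nat \<Rightarrow> nat \<Rightarrow> rat)) \<Rightarrow> nat \<times> (nat \<Rightarrow> rat) \<Rightarrow> 'a tsym \<Rightarrow> nat \<times> (nat \<Rightarrow> rat)" where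
  "dbva_step k \<delta> c \<sigma> = (let (q', M) = \<delta> (fst c) \<sigma> in (q', vec_mat k (snd c) M))"

definition dbva_accepts ::
  "nat \<Rightarrow> (nat \<Rightarrow> 'a tsym \<Rightarrow> nat \<times> (nat \<Rightarrow> nat \<Rightarrow> rat)) \<Rightarrow> nat \<Rightarrow> nat set \<Rightarrow> (nat \<Rightarrow> rat) \<Rightarrow> 'a list \<Rightarrow> bool" where
  "dbva_accepts k \<delta> q0 Qa v w =
     (let c = foldl (dbva_step k \<delta>) (q0, v) ([Cent] @ map Sym w @ [Dollar])
      in fst c \<in> Qa \<and> snd c 0 = 1)"

definition dbva_wf ::
  "'a set \<Rightarrow> nat \<Rightarrow> nat \<Rightarrow> (nat \<Rightarrow> 'a tsym \<Rightarrow> nat \<times> (nat \<Rightarrow> nat \<Rightarrow> rat)) \<Rightarrow> nat \<Rightarrow> nat set \<Rightarrow> bool" where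
  "dbva_wf \<Sigma> m k \<delta> q0 Qa \<longleftrightarrow> 1 \<le> m \<and> 1 \<le> k \<and> q0 < m \<and> Qa \<subseteq> {..<m} \<and>
     (\<forall>q<m. \<forall>\<sigma>\<in>{Cent, Dollar} \<union> Sym ` \<Sigma>. fst (\<delta> q \<sigma>) < m)"

text \<open>Alphabets are finite nonempty sets of natural numbers (wlog, up to renaming).\<close>
definition rtDBVASIZE :: "nat \<Rightarrow> (nat set \<times> nat list set) set" where
  "rtDBVASIZE i = {(\<Sigma>, L). finite \<Sigma> \<and> \<Sigma> \<noteq> {} \<and> L \<subseteq> lists \<Sigma> \<and>
     (\<exists>m k \<delta> q0 Qa v. m * k = i \<and> dbva_wf \<Sigma> m k \<delta> q0 Qa \<and>
        (\<forall>w\<in>lists \<Sigma>. w \<in> L \<longleftrightarrow> dbva_accepts k \<delta> q0 Qa v w))}"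

end

theory Submission
  imports Defs
begin

lemma lin_dep:
  fixes P :: "nat \<Rightarrow> nat \<Rightarrow> rat"
  shows "finite A \<Longrightarrow> card A = Suc n \<Longrightarrow>
    \<exists>c. (\<exists>a\<in>A. c a \<noteq> 0) \<and> (\<forall>j<n. (\<Sum>a\<in>A. c a * P a j) = 0)"
proof (induction n arbitrary: A P)
  case 0
  then obtain a where "A = {a}" by (metis card_1_singletonE One_nat_def)
  then show ?case by (intro exI[of _ "\<lambda>_. 1"]) auto
next
  case (Suc n)
  show ?case
  proof (cases "\<forall>a\<in>A. P a n = 0")
    case True
    from Suc.prems obtain a1 where a1: "a1 \<in> A" by fastforce
    have "card (A - {a1}) = Suc n" using Suc.prems a1 by simp
    from Suc.IH[OF _ this, of P] Suc.prems obtain c where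
      l: "\<exists>a\<in>A - {a1}. c a \<noteq> 0" "\<forall>j<n. (\<Sum>a\<in>A - {a1}. c a * P a j) = 0" by auto
    define cc where "cc = c(a1 := 0)"
    have s: "(\<Sum>a\<in>A. cc a * P a j) = (\<Sum>a\<in>A - {a1}. c a * P a j)" for j
      using Suc.prems a1 by (simp add: sum.remove[of A a1] cc_def)
    show ?thesis
    proof (intro exI[of _ cc] conjI allI impI)
      show "\<exists>a\<in>A. cc a \<noteq> 0" using l(1) cc_def by auto
      fix j assume "j < Suc n"
      then consider "j < n" | "j = n" by linarith
      then show "(\<Sum>a\<in>A. cc a * P a j) = 0"
      proof cases
        case 1 then show ?thesis using s l(2) by simp
      next
        case 2 then show ?thesis using True by simp
      qed
    qed
  next
    case False
    then obtain a0 where a0: "a0 \<in> A" "P a0 n \<noteq> 0" by auto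
    have cA: "card (A - {a0}) = Suc n" using Suc.prems a0 by simp
    define Q where "Q a j = P a j * P a0 n - P a0 j * P a n" for a j
    from Suc.IH[OF _ cA, of Q] Suc.prems obtain \<mu> where
      l: "\<exists>a\<in>A - {a0}. \<mu> a \<noteq> 0" "\<forall>j<n. (\<Sum>a\<in>A - {a0}. \<mu> a * Q a j) = 0" by auto
    define c where "c a = (if a = a0 then - (\<Sum>b\<in>A - {a0}. \<mu> b * P b n) else \<mu> a * P a0 n)" for a
    have s: "(\<Sum>a\<in>A. c a * P a j) = (\<Sum>a\<in>A - {a0}. \<mu> a * Q a j)" for j
    proof -
      have "(\<Sum>a\<in>A. c a * P a j) = c a0 * P a0 j + (\<Sum>a\<in>A - {a0}. c a * P a j)"
        using Suc.prems a0 by (simp add: sum.remove[of A a0])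
      also have "\<dots> = - (\<Sum>b\<in>A - {a0}. \<mu> b * P b n * P a0 j) + (\<Sum>a\<in>A - {a0}. \<mu> a * P a0 n * P a j)"
        by (simp add: c_def sum_distrib_right)
      also have "\<dots> = (\<Sum>a\<in>A - {a0}. \<mu> a * Q a j)"
        by (simp add: Q_def sum_subtractf[symmetric] algebra_simps)
      finally show ?thesis .
    qed
    show ?thesis
    proof (intro exI[of _ c] conjI allI impI)
      show "\<exists>a\<in>A. c a \<noteq> 0" using l(1) a0 by (auto simp: c_def)
      fix j assume "j < Suc n"
      then consider "j < n" | "j = n" by linarith
      then show "(\<Sum>a\<in>A. c a * P a j) = 0"
      proof cases
        case 1 then show ?thesis using s l(2) by simp
      next
        case 2 then show ?thesis unfolding s by (simp add: Q_def)
      qed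
    qed
  qed
qed


definition enc :: "nat \<Rightarrow> nat \<Rightarrow> nat \<Rightarrow> (nat \<Rightarrow> rat) \<Rightarrow> nat \<Rightarrow> rat" where
  "enc m k q w x = (if x < m*k \<and> x div k = q then w (x mod k) else 0)"

definition NM :: "nat \<Rightarrow> nat \<Rightarrow> (nat \<Rightarrow> 'a tsym \<Rightarrow> nat \<times> (nat\<Rightarrow>nat\<Rightarrow>rat)) \<Rightarrow> nat set \<Rightarrow> 'a tsym \<Rightarrow> nat \<Rightarrow> nat \<Rightarrow> rat" where
  "NM m k \<delta> Qa \<sigma> x y = (if x < m*k then (case \<sigma> of
      Dollar \<Rightarrow> (if y = 0 \<and> fst (\<delta> (x div k) Dollar) \<in> Qa then snd (\<delta> (x div k) Dollar) (x mod k) 0 else 0)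
    | _ \<Rightarrow> enc m k (fst (\<delta> (x div k) \<sigma>)) (snd (\<delta> (x div k) \<sigma>) (x mod k)) y) else 0)"

lemma qkj_less: "q < m \<Longrightarrow> j < k \<Longrightarrow> q*k+j < m*(k::nat)"
proof -
  assume "q < m" "j < k"
  then have "q*k + j < q*k + k" by simp
  also have "\<dots> = (q+1)*k" by simp
  also have "\<dots> \<le> m*k" using \<open>q<m\<close> by (intro mult_right_mono) auto
  finally show ?thesis .
qed

lemma sum_enc:
  assumes "q < m" "m*k \<le> d"
  shows "(\<Sum>x<d. enc m k q w x * f x) = (\<Sum>j<k. w j * f (q*k+j))"
proof -
  have inj: "inj_on (\<lambda>j. q*k+j) {..<k}" by (auto simp: inj_on_def)
  have "(\<Sum>j<k. w j * f (q*k+j)) = (\<Sum>j<k. enc m k q w (q*k+j) * f (q*k+j))"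
    using assms qkj_less[OF assms(1)] by (intro sum.cong) (auto simp: enc_def)
  also have "\<dots> = (\<Sum>x\<in>(\<lambda>j. q*k+j) ` {..<k}. enc m k q w x * f x)"
    by (simp add: sum.reindex[OF inj])
  also have "\<dots> = (\<Sum>x<d. enc m k q w x * f x)"
  proof (rule sum.mono_neutral_left)
    show "(\<lambda>j. q*k+j) ` {..<k} \<subseteq> {..<d}" using qkj_less[OF assms(1)] assms(2) by fastforce
    show "\<forall>x\<in>{..<d} - (\<lambda>j. q*k+j) ` {..<k}. enc m k q w x * f x = 0"
    proof
      fix x assume x: "x \<in> {..<d} - (\<lambda>j. q*k+j) ` {..<k}"
      show "enc m k q w x * f x = 0"
      proof (cases "x < m*k \<and> x div k = q")
        case True
        then have "k > 0" by (cases "k = 0") auto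
        then have "x = q*k + x mod k" "x mod k < k" using True
          by (metis div_mult_mod_eq mult.commute, simp)
        then show ?thesis using x by blast
      qed (auto simp: enc_def)
    qed
  qed simp
  finally show ?thesis by simp
qed

lemma step_sim:
  assumes "q < m" "m*k \<le> d" "\<sigma> \<noteq> Dollar" "\<delta> q \<sigma> = (q', M)"
  shows "vec_mat d (enc m k q w) (NM m k \<delta> Qa \<sigma>) = enc m k q' (vec_mat k w M)"
proof
  fix y
  have "vec_mat d (enc m k q w) (NM m k \<delta> Qa \<sigma>) y = (\<Sum>j<k. w j * NM m k \<delta> Qa \<sigma> (q*k+j) y)"
    unfolding vec_mat_def using sum_enc[OF assms(1,2)] by simp
  also have "\<dots> = (\<Sum>j<k. w j * enc m k q' (M j) y)"
  proof (intro sum.cong refl)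
    fix j assume "j \<in> {..<k}"
    then have "q*k+j < m*k" "(q*k+j) div k = q" "(q*k+j) mod k = j" using qkj_less[OF assms(1)] by auto
    then show "w j * NM m k \<delta> Qa \<sigma> (q*k+j) y = w j * enc m k q' (M j) y"
      using assms(3,4) by (cases \<sigma>) (auto simp: NM_def)
  qed
  also have "\<dots> = enc m k q' (vec_mat k w M) y"
    by (auto simp: enc_def vec_mat_def)
  finally show "vec_mat d (enc m k q w) (NM m k \<delta> Qa \<sigma>) y = enc m k q' (vec_mat k w M) y" .
qed

lemma dollar_sim:
  assumes "q < m" "m*k \<le> d" "\<delta> q Dollar = (q', M)"
  shows "vec_mat d (enc m k q w) (NM m k \<delta> Qa Dollar) 0 = (if q' \<in> Qa then vec_mat k w M 0 else 0)"
proof -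
  have "vec_mat d (enc m k q w) (NM m k \<delta> Qa Dollar) 0 = (\<Sum>j<k. w j * NM m k \<delta> Qa Dollar (q*k+j) 0)"
    unfolding vec_mat_def using sum_enc[OF assms(1,2)] by simp
  also have "\<dots> = (\<Sum>j<k. w j * (if q' \<in> Qa then M j 0 else 0))"
  proof (intro sum.cong refl)
    fix j assume "j \<in> {..<k}"
    then have "q*k+j < m*k" "(q*k+j) div k = q" "(q*k+j) mod k = j" using qkj_less[OF assms(1)] by auto
    then show "w j * NM m k \<delta> Qa Dollar (q*k+j) 0 = w j * (if q' \<in> Qa then M j 0 else 0)"
      using assms(3) by (auto simp: NM_def)
  qed
  also have "\<dots> = (if q' \<in> Qa then vec_mat k w M 0 else 0)"
    by (simp add: vec_mat_def)
  finally show ?thesis .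
qed

lemma run_one_state:
  "foldl (dbva_step d (\<lambda>q \<sigma>. (0, N \<sigma>))) c xs = (if xs = [] then fst c else 0, foldl (vec_mat d) (snd c) (map N xs))"
  by (induction xs arbitrary: c) (auto simp: dbva_step_def)

lemma run_sim:
  assumes wf: "dbva_wf \<Sigma> m k \<delta> q0 Qa" and d: "m*k \<le> d"
  shows "u \<in> lists \<Sigma> \<Longrightarrow> q < m \<Longrightarrow>
    foldl (vec_mat d) (enc m k q w) (map (NM m k \<delta> Qa) (map Sym u)) = enc m k (fst (foldl (dbva_step k \<delta>) (q, w) (map Sym u))) (snd (foldl (dbva_step k \<delta>) (q, w) (map Sym u)))
    \<and> fst (foldl (dbva_step k \<delta>) (q, w) (map Sym u)) < m"
proof (induction u arbitrary: q w)
  case Nil then show ?case by simp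
next
  case (Cons a u)
  obtain q' M where qM: "\<delta> q (Sym a) = (q', M)" by fastforce
  have "q' < m" using wf Cons.prems qM unfolding dbva_wf_def by (metis UnI2 fst_conv image_eqI listsE)
  have st: "vec_mat d (enc m k q w) (NM m k \<delta> Qa (Sym a)) = enc m k q' (vec_mat k w M)"
    using step_sim[of q m k d "Sym a" \<delta> q' M] Cons.prems(2) d qM by simp
  have "dbva_step k \<delta> (q, w) (Sym a) = (q', vec_mat k w M)" by (simp add: dbva_step_def qM)
  then show ?case using Cons.IH[OF _ \<open>q'<m\<close>, of "vec_mat k w M"] Cons.prems st by simp
qed

lemma sim:
  assumes wf: "dbva_wf \<Sigma> m k \<delta> q0 Qa" and d: "m*k \<le> d" and w: "w \<in> lists \<Sigma>"
  shows "dbva_accepts d (\<lambda>q \<sigma>. (0, NM m k \<delta> Qa \<sigma>)) 0 {0} (enc m k q0 v) w = dbva_accepts k \<delta> q0 Qa v w"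
proof -
  obtain q1 M1 where c: "\<delta> q0 Cent = (q1, M1)" by fastforce
  have q0: "q0 < m" using wf by (simp add: dbva_wf_def)
  have q1: "q1 < m" using wf c unfolding dbva_wf_def by (metis fst_conv insertI1 UnI1 q0)
  have st: "vec_mat d (enc m k q0 v) (NM m k \<delta> Qa Cent) = enc m k q1 (vec_mat k v M1)"
    using step_sim[of q0 m k d Cent \<delta> q1 M1] q0 d c by simp
  define c2 where "c2 = foldl (dbva_step k \<delta>) (q1, vec_mat k v M1) (map Sym w)"
  have R: "foldl (vec_mat d) (enc m k q1 (vec_mat k v M1)) (map (NM m k \<delta> Qa) (map Sym w)) = enc m k (fst c2) (snd c2)"
    "fst c2 < m"
    using run_sim[OF wf d w q1, of "vec_mat k v M1"] unfolding c2_def by auto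
  obtain q3 M3 where c3: "\<delta> (fst c2) Dollar = (q3, M3)" by fastforce
  have D: "vec_mat d (enc m k (fst c2) (snd c2)) (NM m k \<delta> Qa Dollar) 0 = (if q3 \<in> Qa then vec_mat k (snd c2) M3 0 else 0)"
    using dollar_sim[of "fst c2" m k d \<delta> q3 M3] R(2) d c3 by simp
  have lhs: "dbva_accepts d (\<lambda>q \<sigma>. (0, NM m k \<delta> Qa \<sigma>)) 0 {0} (enc m k q0 v) w \<longleftrightarrow>
     (if q3 \<in> Qa then vec_mat k (snd c2) M3 0 else 0) = 1"
    unfolding dbva_accepts_def run_one_state using st R(1) D by simp
  have rhs: "dbva_accepts k \<delta> q0 Qa v w \<longleftrightarrow> q3 \<in> Qa \<and> vec_mat k (snd c2) M3 0 = 1"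
    unfolding dbva_accepts_def using c c3
    by (simp add: c2_def dbva_step_def case_prod_beta split: prod.splits)
  show ?thesis using lhs rhs by auto
qed


lemma vm_lin: "foldl (vec_mat d) (\<lambda>y. \<Sum>a\<in>A. c a * P a y) Ms = (\<lambda>y. \<Sum>a\<in>A. c a * foldl (vec_mat d) (P a) Ms y)"
proof (induction Ms arbitrary: P)
  case Nil then show ?case by simp
next
  case (Cons M Ms)
  have "vec_mat d (\<lambda>y. \<Sum>a\<in>A. c a * P a y) M = (\<lambda>y. \<Sum>a\<in>A. c a * vec_mat d (P a) M y)"
    unfolding vec_mat_def
    by (auto simp: sum_distrib_right sum_distrib_left mult.assoc intro!: ext sum.swap)
  then show ?case using Cons.IH[of "\<lambda>a. vec_mat d (P a) M"] by simp
qed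

lemma vm_zero0: "foldl (vec_mat d) (\<lambda>_. 0) Ms = (\<lambda>_. 0)"
  by (induction Ms) (auto simp: vec_mat_def)

lemma vm_zero: "\<forall>y<d. C y = 0 \<Longrightarrow> Ms \<noteq> [] \<Longrightarrow> foldl (vec_mat d) C Ms = (\<lambda>_. 0)"
proof (cases Ms)
  case (Cons M Ms')
  assume "\<forall>y<d. C y = 0"
  then have "vec_mat d C M = (\<lambda>_. 0)" by (auto simp: vec_mat_def)
  then show ?thesis using Cons vm_zero0 by simp
qed simp

lemma dfa_run:
  "foldl (dbva_step 1 \<delta>) (q, \<lambda>_. 1) xs = (foldl (\<lambda>q \<sigma>. fst (\<delta> q \<sigma>)) q xs, \<lambda>_. 1)"
  if "\<forall>q \<sigma>. snd (\<delta> q \<sigma>) = (\<lambda>_ _. 1)"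
  using that by (induction xs arbitrary: q) (auto simp: dbva_step_def vec_mat_def case_prod_beta)

lemma dfa_count:
  "foldl (\<lambda>q \<sigma>. case \<sigma> of Sym _ \<Rightarrow> min (q+1) (N+1) | _ \<Rightarrow> q) q (map Sym u)
     = min (q + length u) (N+1)" if "q \<le> N+1"
  using that by (induction u arbitrary: q) (auto simp: min_def)

lemma incl:
  assumes "i > 1"
  shows "rtDBVASIZE (i - 1) \<subseteq> rtDBVASIZE i"
proof
  fix x assume "x \<in> rtDBVASIZE (i - 1)"
  obtain \<Sigma> L where x: "x = (\<Sigma>, L)" by (cases x)
  have fin: "finite \<Sigma>" "\<Sigma> \<noteq> {}" "L \<subseteq> lists \<Sigma>"
    and "\<exists>m k \<delta> q0 Qa v. m * k = i - 1 \<and> dbva_wf \<Sigma> m k \<delta> q0 Qa \<and>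
        (\<forall>w\<in>lists \<Sigma>. w \<in> L \<longleftrightarrow> dbva_accepts k \<delta> q0 Qa v w)"
    using \<open>x \<in> rtDBVASIZE (i - 1)\<close> unfolding rtDBVASIZE_def x by blast+
  then obtain m k \<delta> q0 Qa v where mk: "m * k = i - 1" and wf: "dbva_wf \<Sigma> m k \<delta> q0 Qa"
    and L: "\<forall>w\<in>lists \<Sigma>. w \<in> L \<longleftrightarrow> dbva_accepts k \<delta> q0 Qa v w" by blast
  have d: "m * k \<le> i" using mk by simp
  have wf': "dbva_wf \<Sigma> 1 i (\<lambda>q \<sigma>. (0, NM m k \<delta> Qa \<sigma>)) 0 {0}"
    using assms by (simp add: dbva_wf_def)
  have A: "\<forall>w\<in>lists \<Sigma>. w \<in> L \<longleftrightarrow> dbva_accepts i (\<lambda>q \<sigma>. (0, NM m k \<delta> Qa \<sigma>)) 0 {0} (enc m k q0 v) w"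
    using L sim[OF wf d] by simp
  have "\<exists>m k \<delta> q0 Qa v. m * k = i \<and> dbva_wf \<Sigma> m k \<delta> q0 Qa \<and>
        (\<forall>w\<in>lists \<Sigma>. w \<in> L \<longleftrightarrow> dbva_accepts k \<delta> q0 Qa v w)"
    by (rule exI[of _ 1], rule exI[of _ i]) (use A wf' in auto)
  then show "x \<in> rtDBVASIZE i" unfolding rtDBVASIZE_def x using fin by simp
qed

theorem theorem12:
  fixes i :: nat
  assumes "i > 1"
  shows "rtDBVASIZE (i - 1) \<subset> rtDBVASIZE i"
proof -
  define N where "N = i - 2"
  have iN: "i = N + 2" using assms N_def by simp
  define L0 where "L0 = {w \<in> lists {0::nat}. length w \<noteq> N}"
  define \<delta> :: "nat \<Rightarrow> nat tsym \<Rightarrow> nat \<times> (nat \<Rightarrow> nat \<Rightarrow> rat)" where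
    "\<delta> = (\<lambda>q \<sigma>. (case \<sigma> of Sym _ \<Rightarrow> min (q+1) (N+1) | _ \<Rightarrow> q, \<lambda>_ _. 1))"
  have inI: "({0}, L0) \<in> rtDBVASIZE i"
  proof -
    have wf: "dbva_wf {0} i 1 \<delta> 0 ({..<i} - {N})"
      unfolding dbva_wf_def \<delta>_def using iN by (auto split: tsym.splits)
    have acc: "dbva_accepts 1 \<delta> 0 ({..<i} - {N}) (\<lambda>_. 1) w \<longleftrightarrow> length w \<noteq> N" for w :: "nat list"
    proof -
      have sn: "\<forall>q \<sigma>. snd (\<delta> q \<sigma>) = (\<lambda>_ _. 1)" by (simp add: \<delta>_def)
      have c: "foldl (\<lambda>q \<sigma>. fst (\<delta> q \<sigma>)) 0 (map Sym w) = min (length w) (N+1)"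
        unfolding \<delta>_def fst_conv using dfa_count[of 0 N w] by (simp only: add_0 le0)
      show ?thesis unfolding dbva_accepts_def dfa_run[OF sn] using c iN
        by (simp add: \<delta>_def min_def)
    qed
    have "\<exists>m k \<delta> q0 Qa v. m * k = i \<and> dbva_wf {0} m k \<delta> q0 Qa \<and>
        (\<forall>w\<in>lists {0::nat}. w \<in> L0 \<longleftrightarrow> dbva_accepts k \<delta> q0 Qa v w)"
      by (rule exI[of _ i], rule exI[of _ 1], rule exI[of _ \<delta>], rule exI[of _ 0], rule exI[of _ "{..<i} - {N}"], rule exI[of _ "\<lambda>_. 1"]) (use wf acc L0_def in auto)
    then show ?thesis unfolding rtDBVASIZE_def L0_def by auto
  qed
  have notin: "({0}, L0) \<notin> rtDBVASIZE (i - 1)"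
  proof
    assume "({0}, L0) \<in> rtDBVASIZE (i - 1)"
    then obtain m k dl q0 Qa v where mk: "m * k = i - 1" and wf: "dbva_wf {0::nat} m k dl q0 Qa"
      and L: "\<forall>w\<in>lists {0}. w \<in> L0 \<longleftrightarrow> dbva_accepts k dl q0 Qa v w"
      unfolding rtDBVASIZE_def by blast
    define d where "d = i - 1"
    define NN where "NN = NM m k dl Qa"
    define V0 where "V0 = enc m k q0 v"
    have L': "length w \<noteq> N \<longleftrightarrow> foldl (vec_mat d) V0 (map NN ([Cent] @ map Sym w @ [Dollar])) 0 = 1"
      if "w \<in> lists {0}" for w
    proof -
      have "length w \<noteq> N \<longleftrightarrow> dbva_accepts k dl q0 Qa v w" using L that L0_def by auto
      also have "\<dots> \<longleftrightarrow> dbva_accepts d (\<lambda>q \<sigma>. (0, NN \<sigma>)) 0 {0} V0 w"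
        using sim[OF wf _ that, of d v] mk d_def NN_def V0_def by simp
      also have "\<dots> \<longleftrightarrow> foldl (vec_mat d) V0 (map NN ([Cent] @ map Sym w @ [Dollar])) 0 = 1"
        unfolding dbva_accepts_def run_one_state by simp
      finally show ?thesis .
    qed
    define Pa where "Pa a = foldl (vec_mat d) V0 (map NN (Cent # replicate a (Sym 0)))" for a
    define F where "F b P = foldl (vec_mat d) P (map NN (replicate b (Sym 0) @ [Dollar])) 0" for b P
    have val: "F b (Pa a) = 1 \<longleftrightarrow> a + b \<noteq> N" for a b
    proof -
      have "replicate (a+b) (0::nat) \<in> lists {0}" by (induction "a+b") auto
      from L'[OF this] show ?thesis
        by (simp add: Pa_def F_def replicate_add)
    qed
    obtain c where c: "\<exists>a\<in>{..<i}. c a \<noteq> 0" "\<forall>j<d. (\<Sum>a\<in>{..<i}. c a * Pa a j) = 0"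
      using lin_dep[of "{..<i}" d Pa] d_def iN by auto
    have E: "(\<Sum>a<i. c a * F b (Pa a)) = 0" for b
    proof -
      have "(\<Sum>a<i. c a * F b (Pa a)) = foldl (vec_mat d) (\<lambda>y. \<Sum>a<i. c a * Pa a y) (map NN (replicate b (Sym 0) @ [Dollar])) 0"
        unfolding F_def vm_lin by simp
      also have "\<dots> = 0" using vm_zero[of d "\<lambda>y. \<Sum>a<i. c a * Pa a y" "map NN (replicate b (Sym 0) @ [Dollar])"] c(2)
        by (simp del: map_append foldl_append)
      finally show ?thesis .
    qed
    have S0: "(\<Sum>a<i. c a) = 0"
    proof -
      have "F (N+1) (Pa a) = 1" for a using val[of "N+1" a] by simp
      then show ?thesis using E[of "N+1"] by simp
    qed
    have Z: "c a = 0" if "a \<le> N" for a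
    proof -
      have "(\<Sum>a'<i. c a' * (F (N-a) (Pa a') - 1)) = (\<Sum>a'<i. c a' * F (N-a) (Pa a')) - (\<Sum>a'<i. c a')"
        by (simp add: algebra_simps sum_subtractf)
      also have "\<dots> = 0" using E S0 by simp
      finally have s: "(\<Sum>a'<i. c a' * (F (N-a) (Pa a') - 1)) = 0" .
      have ai: "a \<in> {..<i}" using that iN by simp
      have "(\<Sum>a'<i. c a' * (F (N-a) (Pa a') - 1)) = c a * (F (N-a) (Pa a) - 1) + (\<Sum>a'\<in>{..<i}-{a}. c a' * (F (N-a) (Pa a') - 1))"
        using ai by (simp add: sum.remove)
      also have "(\<Sum>a'\<in>{..<i}-{a}. c a' * (F (N-a) (Pa a') - 1)) = 0"
      proof (rule sum.neutral, rule ballI)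
        fix a' assume "a' \<in> {..<i} - {a}"
        then have "a' + (N - a) \<noteq> N" using that by auto
        then show "c a' * (F (N-a) (Pa a') - 1) = 0" using val by simp
      qed
      finally have "c a * (F (N-a) (Pa a) - 1) = 0" using s by simp
      moreover have "F (N-a) (Pa a) \<noteq> 1" using val that by simp
      ultimately show ?thesis by simp
    qed
    have "{..<i} = insert (N+1) {..<N+1}" using iN by auto
    then have "(\<Sum>a<i. c a) = c (N+1) + (\<Sum>a<N+1. c a)" by simp
    also have "(\<Sum>a<N+1. c a) = 0" using Z by simp
    finally have "c (N+1) = 0" using S0 by simp
    then have "\<forall>a<i. c a = 0" using Z iN by (metis less_Suc_eq_le add_2_eq_Suc' le_SucE Suc_eq_plus1 less_antisym)
    then show False using c(1) by auto
  qed
  show ?thesis using incl[OF assms] inI notin by blast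
qed
end
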